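(* Let $p\ge 3$ be an odd integer, $\mu>0$ and $\alpha>0$. Let $(x_0,y_0)\in\mathbb{R}^2$ and let $(x,y)\in C^1([0,\infty);\mathbb{R}^2)$ be the global solution of \[ x'(t)=y(t),\qquad y'(t)=-\alpha x(t)^p-\mu y(t),\quad t>0,\qquad x(0)=x_0,\ y(0)=y_0. \] Define \[ \mathcal{E}(t):=\frac12 y(t)^2+\frac{\mu}{2}x(t)y(t)+\frac{\mu^2}{4}x(t)^2+\frac{\alpha}{p+1}x(t)^{p+1}. \] Then there exists a constant $\nu>0$ such that \[ \mathcal{E}'(t)+\nu\,\frac{\mathcal{E}(t)^{\frac{p+1}{2}}}{1+\mathcal{E}(t)^{\frac{p-1}{2}}}\le 0\quad\text{for all } t\ge 0. \]
   Context: The function $\mathcal{E}(t)$ is nonnegative for all $t$ (since $p+1$ is even and $\mathcal{E}(t)=\frac14(y+\mu x)^2+\frac14 y^2+\frac{\alpha}{p+1}x^{p+1}$), so its real powers are well defined. *)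

theory Defs
  imports "HOL-Analysis.Analysis"
begin

definition energy :: "nat \<Rightarrow> real \<Rightarrow> real \<Rightarrow> (real \<Rightarrow> real) \<Rightarrow> (real \<Rightarrow> real) \<Rightarrow> real \<Rightarrow> real" where
  "energy p \<mu> \<alpha> x y t =
     (1/2) * (y t)^2 + (\<mu>/2) * x t * y t + (\<mu>^2/4) * (x t)^2 + \<alpha> / real (p+1) * (x t)^(p+1)"

end

theory Submission
  imports Defs
begin

lemma uniq: "at t within S \<noteq> bot \<Longrightarrow> (f has_real_derivative a) (at t within S) \<Longrightarrow> (f has_real_derivative b) (at t within S) \<Longrightarrow> a = b"
  using vector_derivative_unique_within has_real_derivative_iff_has_vector_derivative by blast

lemma notbot: "(t::real) \<ge> 0 \<Longrightarrow> at t within {0..} \<noteq> bot"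
proof -
  assume "t \<ge> 0"
  have "t islimpt {t<..t+1}" by (simp add: islimpt_greaterThanLessThan1 islimpt_Ioc)
  then have "t islimpt {0..}" by (rule islimpt_subset) (use \<open>t \<ge> 0\<close> in auto)
  then show ?thesis by (simp add: trivial_limit_within)
qed

lemma key:
  fixes q :: nat and \<mu> \<alpha> a b u v E f :: real
  assumes q: "q \<ge> 1" and al: "\<alpha> > 0" and a: "a > 0" and b: "b > 0"
    and u: "u \<ge> 0" and v: "v \<ge> 0" and E: "E \<ge> 0"
    and f: "f = v + \<alpha> * u^q"
    and a_def: "a = K * (2 + 2/\<alpha>)"
    and b_def: "b = K * (1 + r + 1/\<alpha>)"
    and r: "r \<ge> 0" "r^q = 1/\<alpha>"
    and K: "K > 0"
    and EK: "E \<le> K * (v + u + u^q)"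
  shows "E^q \<le> (a + b^q) * f * (1 + E^(q-1))"
proof -
  have f0: "f \<ge> 0" using f v u al by simp
  have uq: "u^q \<le> f/\<alpha>" using f v al by (simp add: field_simps)
  show ?thesis
  proof (cases "f \<ge> 1")
    case True
    have "u \<le> 1 + u^q"
    proof (cases "u \<le> 1")
      case False
      then have "u^1 \<le> u^q" using q by (intro power_increasing) auto
      then show ?thesis by simp
    qed (use u in \<open>simp add: add_increasing2\<close>)
    also have "\<dots> \<le> f + f/\<alpha>" using True uq by simp
    finally have uu: "u \<le> f + f/\<alpha>" .
    have "v \<le> f" using f u al by simp
    then have "v + u + u^q \<le> f + (f + f/\<alpha>) + f/\<alpha>" using uu uq by simp
    then have "E \<le> K * (f + (f + f/\<alpha>) + f/\<alpha>)"
      using EK K by (meson order_trans mult_left_mono less_imp_le)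
    also have "\<dots> = a * f" using a_def by (simp add: field_simps)
    finally have Ea: "E \<le> a * f" .
    have "E^q = E * E^(q-1)" proof -
      have "q = Suc (q-1)" using q by simp
      then show ?thesis by (metis power_Suc)
    qed
    also have "\<dots> \<le> (a*f) * E^(q-1)" using Ea E by (simp add: mult_right_mono)
    also have "\<dots> \<le> (a*f) * (1 + E^(q-1))" using a f0 by (intro mult_left_mono) auto
    also have "\<dots> \<le> (a + b^q) * f * (1 + E^(q-1))"
    proof (rule mult_right_mono)
      show "a * f \<le> (a + b^q) * f" using f0 b by (intro mult_right_mono) auto
      show "0 \<le> 1 + E^(q-1)" using E by (simp add: add_nonneg_nonneg)
    qed
    finally show ?thesis .
  next
    case False
    define s where "s = root q f"
    have s0: "s \<ge> 0" using f0 s_def by (simp add: real_root_ge_zero)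
    have sq: "s^q = f" using f0 q s_def by simp
    have s1: "s \<le> 1" using False sq q s0 power_le_one_iff[of s q] by auto
    have vs: "v \<le> s"
    proof -
      have "v \<le> f" using f u al by simp
      also have "f = s^q" using sq by simp
      also have "\<dots> \<le> s^1" using s0 s1 q by (intro power_decreasing) auto
      finally show ?thesis by simp
    qed
    have "(r * s)^q = f/\<alpha>" by (simp add: power_mult_distrib r sq)
    then have "u^q \<le> (r * s)^q" using uq by simp
    then have ur: "u \<le> r * s" using r s0 q u power_mono_iff[of u "r * s" q] by auto
    have uqs: "u^q \<le> s / \<alpha>"
    proof -
      have "s^q \<le> s^1" using s0 s1 q by (intro power_decreasing) auto
      then have "s^q/\<alpha> \<le> s/\<alpha>" using al by (intro divide_right_mono) auto
      then show ?thesis using uq sq by simp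
    qed
    have "v + u + u^q \<le> s + r * s + s/\<alpha>" using vs ur uqs by simp
    then have "E \<le> K * (s + r * s + s/\<alpha>)"
      using EK K by (meson order_trans mult_left_mono less_imp_le)
    also have "\<dots> = b * s" using b_def by (simp add: field_simps)
    finally have "E \<le> b * s" .
    then have "E^q \<le> (b* s)^q" using E by (intro power_mono) auto
    also have "\<dots> = b^q * f" using sq by (simp add: power_mult_distrib)
    also have "\<dots> \<le> (a + b^q) * f * (1 + E^(q-1))"
    proof -
      have "b^q * f \<le> (a + b^q) * f" using a f0 by (intro mult_right_mono) auto
      also have "\<dots> = (a + b^q) * f * 1" by simp
      also have "\<dots> \<le> (a + b^q) * f * (1 + E^(q-1))"
        using a b f0 E by (intro mult_left_mono) auto
      finally show ?thesis .
    qed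
    finally show ?thesis .
  qed
qed

lemma ebound:
  fixes X Y \<mu> \<alpha> :: real and p q :: nat
  assumes "p + 1 = 2*q" and "\<mu> > 0" and "\<alpha> > 0"
  shows "(1/2) * Y^2 + (\<mu>/2) * X * Y + (\<mu>^2/4) * X^2 + \<alpha> / real (p+1) * X^(p+1) \<ge> 0"
    and "(1/2) * Y^2 + (\<mu>/2) * X * Y + (\<mu>^2/4) * X^2 + \<alpha> / real (p+1) * X^(p+1)
         \<le> (1 + \<mu> + \<mu>^2 + \<alpha>) * (Y^2 + X^2 + (X^2)^q)"
proof -
  have "X^(p+1) = X^(2*q)" using assms(1) by simp
  then have xp: "X^(p+1) = (X^2)^q" by (simp only: power_mult)
  have uq: "(X^2)^q \<ge> 0" by simp
  have "\<alpha> / real (p+1) \<le> \<alpha> / 1" using assms by (intro divide_left_mono) auto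
  then have c: "\<alpha> / real (p+1) \<le> \<alpha>" by simp
  have c0: "\<alpha> / real (p+1) \<ge> 0" using assms by simp
  have t: "\<alpha> / real (p+1) * X^(p+1) \<ge> 0" unfolding xp using c0 uq by (rule mult_nonneg_nonneg)
  have sq: "(1/2) * Y^2 + (\<mu>/2) * X * Y + (\<mu>^2/4) * X^2 = (1/4)*(Y + \<mu>*X)^2 + (1/4)*Y^2"
    by (simp add: power2_eq_square algebra_simps)
  show "(1/2) * Y^2 + (\<mu>/2) * X * Y + (\<mu>^2/4) * X^2 + \<alpha> / real (p+1) * X^(p+1) \<ge> 0"
  proof -
    have "(1/4)*(Y + \<mu>*X)^2 \<ge> 0" "(1/4)*Y^2 \<ge> (0::real)" by simp_all
    then show ?thesis using sq t by linarith
  qed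
  have "2*(X*Y) \<le> X^2 + Y^2" using sum_squares_bound[of X Y] by (simp only: mult.assoc)
  then have "X * Y \<le> (X^2 + Y^2)/2" by (simp add: field_simps)
  then have "(\<mu>/2) * (X * Y) \<le> (\<mu>/2) * ((X^2 + Y^2)/2)" using assms(2) by (intro mult_left_mono) auto
  moreover have "(\<mu>/2) * ((X^2 + Y^2)/2) = (\<mu>/4) * X^2 + (\<mu>/4) * Y^2" by (simp add: field_simps)
  moreover have "(\<mu>/2) * X * Y = (\<mu>/2) * (X * Y)" by (simp only: mult.assoc)
  ultimately have a1: "(\<mu>/2) * X * Y \<le> (\<mu>/4) * X^2 + (\<mu>/4) * Y^2" by linarith
  have a2: "\<alpha> / real (p+1) * X^(p+1) \<le> \<alpha> * (X^2)^q" unfolding xp by (rule mult_right_mono[OF c uq])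
  have "(1/2) * Y^2 + (\<mu>/2) * X * Y + (\<mu>^2/4) * X^2 + \<alpha> / real (p+1) * X^(p+1)
     \<le> (1/2 + \<mu>/4) * Y^2 + (\<mu>/4 + \<mu>^2/4) * X^2 + \<alpha> * (X^2)^q"
  proof -
    have e1: "(1/2 + \<mu>/4) * Y^2 = (1/2) * Y^2 + (\<mu>/4) * Y^2" by (simp add: distrib_right)
    have e2: "(\<mu>/4 + \<mu>^2/4) * X^2 = (\<mu>/4) * X^2 + (\<mu>^2/4) * X^2" by (simp add: distrib_right)
    show ?thesis unfolding e1 e2 using a1 a2 by linarith
  qed
  also have "\<dots> \<le> (1 + \<mu> + \<mu>^2 + \<alpha>) * (Y^2 + X^2 + (X^2)^q)"
  proof -
    have y2: "Y^2 \<ge> 0" "X^2 \<ge> 0" "\<mu>^2 \<ge> 0" by auto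
    have k1: "1/2 + \<mu>/4 \<le> 1 + \<mu> + \<mu>^2 + \<alpha>" "\<mu>/4 + \<mu>^2/4 \<le> 1 + \<mu> + \<mu>^2 + \<alpha>"
      "\<alpha> \<le> 1 + \<mu> + \<mu>^2 + \<alpha>" using y2 assms by linarith+
    have "(1/2 + \<mu>/4) * Y^2 \<le> (1 + \<mu> + \<mu>^2 + \<alpha>) * Y^2"
      using y2 k1 by (intro mult_right_mono) auto
    moreover have "(\<mu>/4 + \<mu>^2/4) * X^2 \<le> (1 + \<mu> + \<mu>^2 + \<alpha>) * X^2"
      using y2 k1 by (intro mult_right_mono) auto
    moreover have "\<alpha> * (X^2)^q \<le> (1 + \<mu> + \<mu>^2 + \<alpha>) * (X^2)^q"
      using y2 uq k1 by (intro mult_right_mono) auto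
    moreover have "(1 + \<mu> + \<mu>^2 + \<alpha>) * (Y^2 + X^2 + (X^2)^q) = (1 + \<mu> + \<mu>^2 + \<alpha>) * Y^2 + (1 + \<mu> + \<mu>^2 + \<alpha>) * X^2 + (1 + \<mu> + \<mu>^2 + \<alpha>) * (X^2)^q"
      by (simp add: distrib_left)
    ultimately show ?thesis by linarith
  qed
  finally show "(1/2) * Y^2 + (\<mu>/2) * X * Y + (\<mu>^2/4) * X^2 + \<alpha> / real (p+1) * X^(p+1)
         \<le> (1 + \<mu> + \<mu>^2 + \<alpha>) * (Y^2 + X^2 + (X^2)^q)" .
qed

lemma ederiv:
  fixes p :: nat and \<mu> \<alpha> :: real and x y :: "real \<Rightarrow> real"
  assumes  "\<alpha> > 0" and t: "t \<ge> 0"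
    and dx: "\<And>t. t \<ge> 0 \<Longrightarrow> (x has_real_derivative y t) (at t within {0..})"
    and dy: "\<And>t. t \<ge> 0 \<Longrightarrow>
           (y has_real_derivative (- \<alpha> * (x t)^p - \<mu> * y t)) (at t within {0..})"
  shows "((energy p \<mu> \<alpha> x y) has_real_derivative (-(\<mu>/2)*((y t)^2 + \<alpha>*(x t)^(p+1)))) (at t within {0..})"
proof -
  have eq: "energy p \<mu> \<alpha> x y = (\<lambda>t. (1/2) * (y t)^2 + (\<mu>/2) * x t * y t + (\<mu>^2/4) * (x t)^2 + \<alpha> / real (p+1) * (x t)^(p+1))"
    by (rule ext) (simp add: energy_def)
  have xp: "(x t)^(p+1) = x t * (x t)^p" by simp
  show ?thesis unfolding eq
    apply (rule derivative_eq_intros dx[OF t] dy[OF t] refl)+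
    apply (simp add: xp field_simps power2_eq_square)
    done
qed

theorem proposition1:
  fixes p :: nat and \<mu> \<alpha> x0 y0 :: real and x y :: "real \<Rightarrow> real"
  assumes "p \<ge> 3" and "odd p" and "\<mu> > 0" and "\<alpha> > 0"
    and "\<And>t. t \<ge> 0 \<Longrightarrow> (x has_real_derivative y t) (at t within {0..})"
    and "\<And>t. t \<ge> 0 \<Longrightarrow>
           (y has_real_derivative (- \<alpha> * (x t)^p - \<mu> * y t)) (at t within {0..})"
    and "x 0 = x0" and "y 0 = y0"
  shows "\<exists>\<nu>>0. \<forall>t\<ge>0. \<forall>D.
           ((energy p \<mu> \<alpha> x y) has_real_derivative D) (at t within {0..}) \<longrightarrow>
           D + \<nu> * (energy p \<mu> \<alpha> x y t powr ((real p + 1) / 2)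
                  / (1 + energy p \<mu> \<alpha> x y t powr ((real p - 1) / 2))) \<le> 0"
proof -
  define q where "q = (p + 1) div 2"
  have pq: "p + 1 = 2 * q" using assms(2) unfolding q_def by presburger
  have q2: "q \<ge> 2" using pq assms(1) by linarith
  have e1: "(real p + 1) / 2 = real q" using pq by (metis add_2_eq_Suc' mult_2 nonzero_mult_div_cancel_left of_nat_1 of_nat_add of_nat_mult of_nat_numeral real_of_nat_eq_numeral_power_cancel_iff zero_neq_numeral divide_eq_eq mult.commute)
  have e2: "(real p - 1) / 2 = real (q - 1)" using pq q2 e1 by (simp add: field_simps of_nat_diff)
  define K where "K = 1 + \<mu> + \<mu>^2 + \<alpha>"
  have K: "K > 0" using assms(3,4) unfolding K_def by (smt (verit) zero_le_power2)
  define r where "r = root q (1/\<alpha>)"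
  have r: "r \<ge> 0" "r^q = 1/\<alpha>" using assms(4) q2 unfolding r_def by (auto simp: real_root_ge_zero)
  define a where "a = K * (2 + 2/\<alpha>)"
  define b where "b = K * (1 + r + 1/\<alpha>)"
  have a: "a > 0" using K assms(4) unfolding a_def by (simp add: add_pos_nonneg)
  have b: "b > 0" using K assms(4) r unfolding b_def by (simp add: add_pos_nonneg)
  define C where "C = a + b^q"
  have "b^q > 0" using b by simp
  then have C: "C > 0" using a unfolding C_def by simp
  define \<nu> where "\<nu> = \<mu> / (2 * C)"
  have \<nu>: "\<nu> > 0" using C assms(3) unfolding \<nu>_def by simp
  show ?thesis
  proof (intro exI[of _ \<nu>] conjI allI impI \<nu>)
    fix t D :: real
    assume t: "t \<ge> 0" and hD: "((energy p \<mu> \<alpha> x y) has_real_derivative D) (at t within {0..})"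
    define E where "E = energy p \<mu> \<alpha> x y t"
    define u where "u = (x t)^2"
    define v where "v = (y t)^2"
    define f where "f = v + \<alpha> * u^q"
    have xp: "(x t)^(p+1) = u^q" unfolding u_def using pq by (simp add: power_mult)
    have D: "D = -(\<mu>/2) * f"
      using uniq[OF notbot[OF t] hD ederiv[OF assms(4) t assms(5,6)]] xp unfolding f_def v_def by simp
    have E0: "E \<ge> 0" unfolding E_def energy_def using ebound(1)[OF pq assms(3,4)] .
    have EK: "E \<le> K * (v + u + u^q)" unfolding E_def energy_def K_def u_def v_def
      using ebound(2)[OF pq assms(3,4)] .
    have f0: "f \<ge> 0" unfolding f_def u_def v_def using assms(4) by simp
    have main: "E^q \<le> C * f * (1 + E^(q-1))"
      unfolding C_def
      by (rule key[OF _ assms(4) a b _ _ E0 f_def a_def b_def r K EK]) (use q2 in \<open>auto simp: u_def v_def\<close>)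
    have den: "1 + E^(q-1) > 0" using E0 by (simp add: add_pos_nonneg)
    have pw: "E powr ((real p + 1) / 2) / (1 + E powr ((real p - 1) / 2)) = E^q / (1 + E^(q-1))"
    proof (cases "E = 0")
      case True then show ?thesis using q2 by simp
    next
      case False then have "E > 0" using E0 by simp
      then show ?thesis unfolding e1 e2 by (simp add: powr_realpow)
    qed
    have "E^q / (1 + E^(q-1)) \<le> C * f" using main den by (simp add: divide_le_eq)
    then have "\<nu> * (E^q / (1 + E^(q-1))) \<le> \<nu> * (C * f)" using \<nu> by (intro mult_left_mono) auto
    also have "\<nu> * (C * f) = (\<mu>/2) * f" unfolding \<nu>_def using C by simp
    finally have fin: "\<nu> * (E^q / (1 + E^(q-1))) \<le> (\<mu>/2) * f" .
    show "D + \<nu> * (energy p \<mu> \<alpha> x y t powr ((real p + 1) / 2)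
                  / (1 + energy p \<mu> \<alpha> x y t powr ((real p - 1) / 2))) \<le> 0"
    proof -
      have "-(\<mu>/2) * f = -((\<mu>/2) * f)" by simp
      then show ?thesis unfolding E_def[symmetric] pw D using fin by linarith
    qed
  qed
qed

end
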